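(* Let $\epsilon\in\{+1,-1\}$ and $s\ge0$, and let $G_3^{s,\epsilon}=(P_1,P_2,P_3)/Q$ with $P_1=256\epsilon z+96izw+64\epsilon s w^2+64z^3+64i\epsilon s z^2w-3(3\epsilon-16s^2)zw^2+4isw^3$, $P_2=256\epsilon z^2-16w^2+256sz^3+16iz^2w-16\epsilon s zw^2-i\epsilon w^3$, $P_3=w\bigl(256\epsilon-32iw+64z^2-64i\epsilon s zw-(\epsilon+16s^2)w^2\bigr)$, $Q=256\epsilon-32iw+64z^2-192i\epsilon s zw-(17\epsilon+144s^2)w^2+32i\epsilon z^2w+24szw^2+iw^3$. Then $G_3^{s,\epsilon}$ is of degree $2$ if and only if $\epsilon=-1$ and $s=\frac12$.
   Context: For a rational holomorphic map $H=(P_1,\dots,P_{N'})/Q$ with polynomials $P_k,Q$, $H$ is reduced if $P_1,\dots,P_{N'},Q$ have no common factor, and the degree of a reduced rational map is $\max(\deg P_1,\dots,\deg P_{N'},\deg Q)$; the degree of a rational map is that of its reduced representation. *)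

theory Defs
  imports Complex_Main "HOL-Computational_Algebra.Polynomial"
begin

text \<open>Bivariate complex polynomials in (z,w) are represented as complex poly poly:
  the outer variable is w, the coefficients are polynomials in z.\<close>

definition Zv :: "complex poly poly" where "Zv = [:[:0, 1:]:]"
definition Wv :: "complex poly poly" where "Wv = [:0, 1:]"
definition cst :: "complex \<Rightarrow> complex poly poly" where "cst c = [:[:c:]:]"

definition tdeg :: "'a::zero poly poly \<Rightarrow> nat" where
  "tdeg p = Max (insert 0 {degree (coeff p i) + i | i. coeff p i \<noteq> 0})"

definition rat_map_reduced :: "complex poly poly list \<Rightarrow> complex poly poly \<Rightarrow> bool" where
  "rat_map_reduced Ps Q \<longleftrightarrow> (\<forall>d. d dvd Q \<and> (\<forall>p\<in>set Ps. d dvd p) \<longrightarrow> is_unit d)"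

definition rat_map_degree :: "complex poly poly list \<Rightarrow> complex poly poly \<Rightarrow> nat" where
  "rat_map_degree Ps Q = (THE d. \<exists>Ps' Q'. Q' \<noteq> 0 \<and> length Ps' = length Ps \<and>
      (\<forall>k<length Ps. Ps ! k * Q' = Ps' ! k * Q) \<and> rat_map_reduced Ps' Q' \<and>
      d = Max (tdeg ` set (Q' # Ps')))"

definition G3_P1 :: "real \<Rightarrow> real \<Rightarrow> complex poly poly" where
  "G3_P1 e s = (let z = Zv; w = Wv; E = cst (complex_of_real e); S = cst (complex_of_real s); I = cst \<i> in
     256*E*z + 96*I*z*w + 64*E*S*w^2 + 64*z^3 + 64*I*E*S*z^2*w
     - 3*(3*E - 16*S^2)*z*w^2 + 4*I*S*w^3)"

definition G3_P2 :: "real \<Rightarrow> real \<Rightarrow> complex poly poly" where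
  "G3_P2 e s = (let z = Zv; w = Wv; E = cst (complex_of_real e); S = cst (complex_of_real s); I = cst \<i> in
     256*E*z^2 - 16*w^2 + 256*S*z^3 + 16*I*z^2*w - 16*E*S*z*w^2 - I*E*w^3)"

definition G3_P3 :: "real \<Rightarrow> real \<Rightarrow> complex poly poly" where
  "G3_P3 e s = (let z = Zv; w = Wv; E = cst (complex_of_real e); S = cst (complex_of_real s); I = cst \<i> in
     w * (256*E - 32*I*w + 64*z^2 - 64*I*E*S*z*w - (E + 16*S^2)*w^2))"

definition G3_Q :: "real \<Rightarrow> real \<Rightarrow> complex poly poly" where
  "G3_Q e s = (let z = Zv; w = Wv; E = cst (complex_of_real e); S = cst (complex_of_real s); I = cst \<i> in
     256*E - 32*I*w + 64*z^2 - 192*I*E*S*z*w - (17*E + 144*S^2)*w^2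
     + 32*I*E*z^2*w + 24*S*z*w^2 + I*w^3)"

end

theory Submission
  imports Defs "HOL-Computational_Algebra.Polynomial_Factorial" "HOL-Computational_Algebra.Fundamental_Theorem_Algebra" "HOL-Computational_Algebra.Field_as_Ring"
begin


lemma pp_eqI:
  fixes p q :: "complex poly poly"
  assumes "\<And>x y. poly (poly p x) y = poly (poly q x) y"
  shows "p = q"
proof -
  have "\<And>x. poly p x = poly q x"
    using assms poly_eq_poly_eq_iff by blast
  then show ?thesis using poly_eq_poly_eq_iff by blast
qed

lemma eval_map0:
  fixes p :: "complex poly poly"
  shows "poly (map_poly (\<lambda>c. poly c 0) p) w = poly (poly p [:w:]) 0"
  by (induction p) (auto simp: map_poly_pCons)

lemma unit_crit:
  fixes Q P d :: "complex poly poly"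
  assumes dQ: "d dvd Q" and dP: "d dvd P" and lc: "lead_coeff Q = [:c:]" and c0: "c \<noteq> 0"
    and roots: "\<And>w. poly (poly Q [:w:]) 0 = 0 \<Longrightarrow> poly (poly P [:w:]) 0 \<noteq> 0"
  shows "is_unit d"
proof -
  obtain a where Qa: "Q = d * a" using dQ by blast
  obtain b where Pb: "P = d * b" using dP by blast
  have Q0: "Q \<noteq> 0" using lc c0 by auto
  hence d0: "d \<noteq> 0" and a0: "a \<noteq> 0" using Qa by auto
  have "lead_coeff d * lead_coeff a = [:c:]" using lc Qa by (simp add: lead_coeff_mult)
  hence "degree (lead_coeff d) + degree (lead_coeff a) = 0"
    using d0 a0 by (metis degree_mult_eq degree_pCons_0 leading_coeff_0_iff)
  hence "degree (lead_coeff d) = 0" by simp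
  then obtain c' where lcd: "lead_coeff d = [:c':]" by (metis degree_eq_zeroE)
  have c'0: "c' \<noteq> 0" using lcd d0 by auto
  show ?thesis
  proof (cases "degree d = 0")
    case True
    hence "d = [:[:c':]:]" using lcd by (metis degree_eq_zeroE lead_coeff_pCons(2) pCons_0_0)
    hence "d * [:[:1/c':]:] = 1" using c'0 by (simp add: one_pCons)
    thus ?thesis by (metis dvdI)
  next
    case False
    define d0 where "d0 = map_poly (\<lambda>c. poly c 0) d"
    have "coeff d0 (degree d) = c'" unfolding d0_def using lcd by (simp add: coeff_map_poly)
    hence "degree d \<le> degree d0" using c'0 by (simp add: le_degree)
    hence "degree d0 \<noteq> 0" using False by simp
    hence "\<not> constant (poly d0)" using constant_degree[of d0] by simp
    then obtain w where "poly d0 w = 0"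
      using fundamental_theorem_of_algebra[of d0] by blast
    hence dw: "poly (poly d [:w:]) 0 = 0" unfolding d0_def eval_map0 .
    have "poly (poly Q [:w:]) 0 = 0" using dw Qa by simp
    moreover have "poly (poly P [:w:]) 0 = 0" using dw Pb by simp
    ultimately show ?thesis using roots by blast
  qed
qed

lemma tdeg_unit:
  fixes u p :: "complex poly poly"
  assumes "is_unit u"
  shows "tdeg (u * p) = tdeg p"
proof -
  obtain v where v: "u = [:v:]" "is_unit v" using assms is_unit_poly_iff by blast
  obtain c where c: "v = [:c:]" "is_unit c" using v(2) is_unit_poly_iff by blast
  have c0: "c \<noteq> 0" using c by auto
  have "coeff (u * p) i = smult c (coeff p i)" for i
    using v c by simp
  thus ?thesis unfolding tdeg_def using c0 by (simp add: degree_smult_eq)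
qed

lemma rep_unique:
  fixes Q Q' Q'' :: "complex poly poly"
  assumes Q0: "Q \<noteq> 0" and Q'0: "Q' \<noteq> 0" and Q''0: "Q'' \<noteq> 0"
    and l1: "length Ps' = length Ps" and l2: "length Ps'' = length Ps"
    and r1: "\<forall>k<length Ps. Ps ! k * Q' = Ps' ! k * Q"
    and r2: "\<forall>k<length Ps. Ps ! k * Q'' = Ps'' ! k * Q"
    and red1: "rat_map_reduced Ps' Q'" and red2: "rat_map_reduced Ps'' Q''"
  shows "\<exists>u. is_unit u \<and> Q'' = u * Q' \<and> (\<forall>k<length Ps. Ps'' ! k = u * Ps' ! k)"
proof -
  have rel: "Ps' ! k * Q'' = Ps'' ! k * Q'" if k: "k < length Ps" for k
  proof -
    have e1: "Ps ! k * Q' = Ps' ! k * Q" using r1 k by blast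
    have e2: "Ps ! k * Q'' = Ps'' ! k * Q" using r2 k by blast
    have "(Ps' ! k * Q'') * Q = (Ps' ! k * Q) * Q''" by (simp only: ac_simps)
    also have "\<dots> = (Ps ! k * Q') * Q''" by (simp only: e1)
    also have "\<dots> = (Ps ! k * Q'') * Q'" by (simp only: ac_simps)
    also have "\<dots> = (Ps'' ! k * Q) * Q'" by (simp only: e2)
    also have "\<dots> = (Ps'' ! k * Q') * Q" by (simp only: ac_simps)
    finally show ?thesis using Q0 by (simp only: mult_cancel_right simp_thms)
  qed
  define G where "G = gcd Q' Q''"
  have G0: "G \<noteq> 0" using Q'0 G_def by simp
  obtain a b where ab: "Q' = a * G" "Q'' = b * G" "coprime a b"
    using gcd_coprime_exists[of Q' Q''] G0 unfolding G_def by blast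
  have rel2: "Ps' ! k * b = Ps'' ! k * a" if k: "k < length Ps" for k
  proof -
    have "(Ps' ! k * b) * G = (Ps'' ! k * a) * G"
      using rel[OF k] unfolding ab(1,2) by (simp only: ac_simps)
    thus ?thesis using G0 by (simp only: mult_cancel_right simp_thms)
  qed
  have ua: "is_unit a"
  proof -
    have "a dvd p" if pin: "p \<in> set Ps'" for p
    proof -
      obtain k where k: "k < length Ps'" "p = Ps' ! k" using pin[unfolded in_set_conv_nth] by metis
      have "a dvd Ps' ! k * b" using rel2[of k] k l1 by simp
      hence "a dvd Ps' ! k" using coprime_dvd_mult_left_iff[OF ab(3)] by simp
      thus ?thesis using k(2) by simp
    qed
    moreover have "a dvd Q'" using ab by simp
    ultimately show ?thesis using red1[unfolded rat_map_reduced_def, rule_format, of a] by blast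
  qed
  have ub: "is_unit b"
  proof -
    have cba: "coprime b a" using ab(3) by (simp add: coprime_commute)
    have "b dvd p" if pin: "p \<in> set Ps''" for p
    proof -
      obtain k where k: "k < length Ps''" "p = Ps'' ! k" using pin[unfolded in_set_conv_nth] by metis
      have "b dvd Ps'' ! k * a" using rel2[of k, symmetric] k l2 by simp
      hence "b dvd Ps'' ! k" using coprime_dvd_mult_left_iff[OF cba] by simp
      thus ?thesis using k(2) by simp
    qed
    moreover have "b dvd Q''" using ab by simp
    ultimately show ?thesis using red2[unfolded rat_map_reduced_def, rule_format, of b] by blast
  qed
  obtain a' where a': "1 = a * a'" using ua by blast
  have "Q'' = (b * a') * Q'"
  proof -
    have "(b * a') * Q' = b * (a * a') * G" unfolding ab(1) by (simp only: ac_simps)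
    thus ?thesis using a' ab(2) by (simp only: mult_1_right)
  qed
  moreover have "Ps'' ! k = (b * a') * Ps' ! k" if "k < length Ps" for k
  proof -
    have "(b * a') * Ps' ! k = (Ps' ! k * b) * a'" by (simp only: ac_simps)
    also have "\<dots> = (Ps'' ! k * a) * a'" using rel2[OF that] by (simp only:)
    also have "\<dots> = Ps'' ! k * (a * a')" by (simp only: ac_simps)
    finally show ?thesis using a' by simp
  qed
  moreover have "is_unit (b * a')" using ub a' by (metis dvd_triv_right is_unit_mult_iff)
  ultimately show ?thesis by blast
qed

lemma rat_map_degree_eq:
  fixes Q Q' :: "complex poly poly"
  assumes Q0: "Q \<noteq> 0" and Q'0: "Q' \<noteq> 0"
    and l1: "length Ps' = length Ps"
    and r1: "\<forall>k<length Ps. Ps ! k * Q' = Ps' ! k * Q"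
    and red1: "rat_map_reduced Ps' Q'"
  shows "rat_map_degree Ps Q = Max (tdeg ` set (Q' # Ps'))"
  unfolding rat_map_degree_def
proof (rule the_equality)
  show "\<exists>Ps'' Q''. Q'' \<noteq> 0 \<and> length Ps'' = length Ps \<and>
      (\<forall>k<length Ps. Ps ! k * Q'' = Ps'' ! k * Q) \<and> rat_map_reduced Ps'' Q'' \<and>
      Max (tdeg ` set (Q' # Ps')) = Max (tdeg ` set (Q'' # Ps''))"
    using assms by blast
next
  fix d assume "\<exists>Ps'' Q''. Q'' \<noteq> 0 \<and> length Ps'' = length Ps \<and>
      (\<forall>k<length Ps. Ps ! k * Q'' = Ps'' ! k * Q) \<and> rat_map_reduced Ps'' Q'' \<and>
      d = Max (tdeg ` set (Q'' # Ps''))"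
  then obtain Ps'' Q'' where h: "Q'' \<noteq> 0" "length Ps'' = length Ps"
      "\<forall>k<length Ps. Ps ! k * Q'' = Ps'' ! k * Q" "rat_map_reduced Ps'' Q''"
      "d = Max (tdeg ` set (Q'' # Ps''))" by blast
  obtain u where u: "is_unit u" "Q'' = u * Q'" "\<forall>k<length Ps. Ps'' ! k = u * Ps' ! k"
    using rep_unique[OF Q0 Q'0 h(1) l1 h(2) r1 h(3) red1 h(4)] by blast
  have "Ps'' = map ((*) u) Ps'" using u(3) h(2) l1 by (intro nth_equalityI) auto
  hence "set (Q'' # Ps'') = (*) u ` set (Q' # Ps')" using u(2) by simp
  hence "tdeg ` set (Q'' # Ps'') = tdeg ` set (Q' # Ps')"
    using tdeg_unit[OF u(1)] by (simp add: image_image)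
  thus "d = Max (tdeg ` set (Q' # Ps'))" using h(5) by simp
qed



lemma tdeg_ge:
  fixes p :: "'a::zero poly poly"
  assumes "coeff p i \<noteq> 0"
  shows "degree (coeff p i) + i \<le> tdeg p"
proof -
  have "{degree (coeff p i) + i | i. coeff p i \<noteq> 0} \<subseteq> (\<lambda>i. degree (coeff p i) + i) ` {..degree p}"
    using le_degree by blast
  hence fin: "finite (insert 0 {degree (coeff p i) + i | i. coeff p i \<noteq> 0})"
    using finite_surj by blast
  show ?thesis unfolding tdeg_def using assms by (intro Max_ge[OF fin]) blast
qed

lemma tdeg_le:
  fixes p :: "'a::zero poly poly"
  assumes "\<And>i. coeff p i \<noteq> 0 \<Longrightarrow> degree (coeff p i) + i \<le> n"
  shows "tdeg p \<le> n"
proof -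
  have "{degree (coeff p i) + i | i. coeff p i \<noteq> 0} \<subseteq> (\<lambda>i. degree (coeff p i) + i) ` {..degree p}"
    using le_degree by blast
  hence fin: "finite (insert 0 {degree (coeff p i) + i | i. coeff p i \<noteq> 0})"
    using finite_surj by blast
  show ?thesis unfolding tdeg_def using assms by (subst Max_le_iff[OF fin]) auto
qed

lemma tdeg_le3:
  fixes a b c :: "'a::zero poly"
  assumes "degree a \<le> n" "degree b + 1 \<le> n" "degree c + 2 \<le> n"
  shows "tdeg [:a, b, c:] \<le> n"
proof (rule tdeg_le)
  fix i
  have "coeff [:a,b,c:] i = (if i = 0 then a else if i = 1 then b else if i = 2 then c else 0)"
    by (auto simp: coeff_pCons split: nat.split)
  thus "coeff [:a, b, c:] i \<noteq> 0 \<Longrightarrow> degree (coeff [:a, b, c:] i) + i \<le> n"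
    using assms by (auto split: if_splits)
qed

lemma Q_lit: "G3_Q e s = (let E = complex_of_real e; S = complex_of_real s in
   [: [:256*E, 0, 64:], [:-32*\<i>, -192*\<i>*E*S, 32*\<i>*E:], [:-(17*E+144*S^2), 24*S:], [:\<i>:] :])"
  apply (rule pp_eqI)
  apply (simp add: G3_Q_def Zv_def Wv_def cst_def Let_def)
  apply (simp add: algebra_simps power2_eq_square power3_eq_cube)
  done

lemma Q_ne0: "e \<noteq> 0 \<Longrightarrow> G3_Q e s \<noteq> 0"
  by (simp add: Q_lit Let_def)

lemma Q_lc: "lead_coeff (G3_Q e s) = [:\<i>:]"
  by (simp add: Q_lit Let_def)

lemma P1_c0: "coeff (G3_P1 e s) 0 = [:0, 256*complex_of_real e, 0, 64:]"
proof -
  have "poly (G3_P1 e s) 0 = [:0, 256*complex_of_real e, 0, 64:]"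
    apply (rule poly_eq_poly_eq_iff[THEN iffD1], rule ext)
    apply (simp add: G3_P1_def Zv_def Wv_def cst_def Let_def)
    apply (simp add: algebra_simps power2_eq_square power3_eq_cube)
    done
  thus ?thesis by (simp add: poly_0_coeff_0)
qed

lemma tdeg_P1: "3 \<le> tdeg (G3_P1 e s)"
  using tdeg_ge[of "G3_P1 e s" 0] by (simp add: P1_c0)

lemma Q_eval: "poly (poly (G3_Q e s) [:w:]) 0 = (let E = complex_of_real e; S = complex_of_real s in
   256*E - 32*\<i>*w - (17*E+144*S^2)*w^2 + \<i>*w^3)"
  by (simp add: Q_lit Let_def algebra_simps power2_eq_square power3_eq_cube)

lemma P2_eval: "poly (poly (G3_P2 e s) [:w:]) 0 = (let E = complex_of_real e in
   - 16*w^2 - \<i>*E*w^3)"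
  by (simp add: G3_P2_def Zv_def Wv_def cst_def Let_def algebra_simps)


lemma nonspecial_roots:
  assumes e: "e \<in> {1, -1}" and s: "s \<ge> 0" and ns: "\<not> (e = -1 \<and> s = 1/2)"
    and q: "poly (poly (G3_Q e s) [:w:]) 0 = 0"
  shows "poly (poly (G3_P2 e s) [:w:]) 0 \<noteq> 0"
proof
  assume p: "poly (poly (G3_P2 e s) [:w:]) 0 = 0"
  define E where "E = complex_of_real e"
  define S where "S = complex_of_real s"
  have q': "256*E - 32*\<i>*w - (17*E+144*S^2)*w^2 + \<i>*w^3 = 0"
    using q unfolding Q_eval E_def S_def Let_def .
  have p': "- 16*w^2 - \<i>*E*w^3 = 0" using p unfolding P2_eval E_def Let_def .
  have E2: "E * E = 1" using e unfolding E_def by auto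
  have E0: "E \<noteq> 0" using E2 by auto
  have "w^2 * (16 + \<i>*E*w) = -(- 16*w^2 - \<i>*E*w^3)" by (simp add: algebra_simps power2_eq_square power3_eq_cube)
  hence "w^2 * (16 + \<i>*E*w) = 0" by (simp only: p' minus_zero)
  hence "w = 0 \<or> 16 + \<i>*E*w = 0" by simp
  thus False
  proof
    assume "w = 0" thus False using q' E0 by simp
  next
    assume h: "16 + \<i>*E*w = 0"
    have "w = 16*\<i>*E"
    proof -
      have "(-\<i>*E) * (16 + \<i>*E*w) = 0" using h by simp
      hence "-16*\<i>*E + (E*E)*w = 0" by (simp add: algebra_simps)
      thus ?thesis using E2 by (simp add: algebra_simps)
    qed
    hence "256*E - 32*\<i>*(16*\<i>*E) - (17*E+144*S^2)*(16*\<i>*E)^2 + \<i>*(16*\<i>*E)^3 = 0"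
      using q' by simp
    hence "768*E + 8448*E*(E*E) + 36864*S^2*(E*E) = 0"
      by (simp add: algebra_simps power2_eq_square power3_eq_cube)
    hence h2: "9216*E + 36864*S^2 = 0" unfolding E2 by (simp add: algebra_simps)
    have "9216*e + 36864*s^2 = 0"
    proof -
      have "complex_of_real (9216*e + 36864*s^2) = 0" using h2 unfolding E_def S_def by simp
      thus ?thesis by (simp only: of_real_eq_0_iff)
    qed
    moreover have "9216*e + 36864*s^2 \<noteq> 0"
    proof (cases "e = 1")
      case True
      have "0 \<le> 36864 * s^2" by simp
      thus ?thesis using True by linarith
    next
      case False
      hence em: "e = -1" using e by simp
      hence "s \<noteq> 1/2" using ns by simp
      have "(2*s - 1) * (2*s + 1) \<noteq> 0" using \<open>s \<noteq> 1/2\<close> s by simp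
      thus ?thesis using em by (simp add: algebra_simps power2_eq_square)
    qed
    ultimately show False by simp
  qed
qed

lemma nonspecial_reduced:
  assumes e: "e \<in> {1, -1}" and s: "s \<ge> 0" and ns: "\<not> (e = -1 \<and> s = 1/2)"
  shows "rat_map_reduced [G3_P1 e s, G3_P2 e s, G3_P3 e s] (G3_Q e s)"
  unfolding rat_map_reduced_def
proof (intro allI impI)
  fix d assume "d dvd G3_Q e s \<and> (\<forall>p\<in>set [G3_P1 e s, G3_P2 e s, G3_P3 e s]. d dvd p)"
  hence d1: "d dvd G3_Q e s" and d2: "d dvd G3_P2 e s" by auto
  show "is_unit d"
    by (rule unit_crit[OF d1 d2 Q_lc]) (simp, use nonspecial_roots[OF e s ns] in blast)
qed



definition "Dsp = [: [:-16, 8:], [:\<i>:] :]"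
definition "Qsp = [: [:16, 8:], [:3*\<i>, -4*\<i>:], [:1:] :]"
definition "P1sp = [: [:0, 16, 8:], [:0, -5*\<i>:], [:2:] :]"
definition "P2sp = [: [:0, 0, 16:], 0, [:1:] :]"
definition "P3sp = [: 0, [:16, 8:], [:3*\<i>:] :]"

lemma sp_Q: "G3_Q (-1) (1/2) = Dsp * Qsp"
  apply (rule pp_eqI)
  apply (simp add: G3_Q_def Zv_def Wv_def cst_def Let_def Dsp_def Qsp_def)
  apply (simp add: algebra_simps power2_eq_square power3_eq_cube)
  done

lemma sp_P1: "G3_P1 (-1) (1/2) = Dsp * P1sp"
  apply (rule pp_eqI)
  apply (simp add: G3_P1_def Zv_def Wv_def cst_def Let_def Dsp_def P1sp_def)
  apply (simp add: algebra_simps power2_eq_square power3_eq_cube)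
  done

lemma sp_P2: "G3_P2 (-1) (1/2) = Dsp * P2sp"
  apply (rule pp_eqI)
  apply (simp add: G3_P2_def Zv_def Wv_def cst_def Let_def Dsp_def P2sp_def)
  apply (simp add: algebra_simps power2_eq_square power3_eq_cube)
  done

lemma sp_P3: "G3_P3 (-1) (1/2) = Dsp * P3sp"
  apply (rule pp_eqI)
  apply (simp add: G3_P3_def Zv_def Wv_def cst_def Let_def Dsp_def P3sp_def)
  apply (simp add: algebra_simps power2_eq_square power3_eq_cube)
  done

lemma sp_reduced: "rat_map_reduced [P1sp, P2sp, P3sp] Qsp"
  unfolding rat_map_reduced_def
proof (intro allI impI)
  fix d assume "d dvd Qsp \<and> (\<forall>p\<in>set [P1sp, P2sp, P3sp]. d dvd p)"
  hence d1: "d dvd Qsp" and d2: "d dvd P2sp" by auto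
  have lc: "lead_coeff Qsp = [:1:]" by (simp add: Qsp_def)
  show "is_unit d"
  proof (rule unit_crit[OF d1 d2 lc])
    fix w assume q: "poly (poly Qsp [:w:]) 0 = 0"
    show "poly (poly P2sp [:w:]) 0 \<noteq> 0"
    proof
      assume "poly (poly P2sp [:w:]) 0 = 0"
      hence "w = 0" by (simp add: P2sp_def)
      thus False using q by (simp add: Qsp_def)
    qed
  qed simp
qed

lemma sp_degree: "Max (tdeg ` set (Qsp # [P1sp, P2sp, P3sp])) = 2"
proof -
  have a: "tdeg Qsp \<le> 2" "tdeg P1sp \<le> 2" "tdeg P2sp \<le> 2" "tdeg P3sp \<le> 2"
    unfolding Qsp_def P1sp_def P2sp_def P3sp_def by (rule tdeg_le3; simp)+
  have b: "2 \<le> tdeg Qsp" using tdeg_ge[of Qsp 2] by (simp add: Qsp_def numeral_2_eq_2)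
  show ?thesis
    apply (rule antisym)
     apply (subst Max_le_iff) using a apply auto[3]
    apply (rule order.trans[OF b]) apply (rule Max_ge) apply auto
    done
qed

theorem lemma4p2:
  fixes e s :: real
  assumes "e \<in> {1, -1}" and "s \<ge> 0"
  shows "rat_map_degree [G3_P1 e s, G3_P2 e s, G3_P3 e s] (G3_Q e s) = 2
         \<longleftrightarrow> e = -1 \<and> s = 1/2"
proof
  assume "e = -1 \<and> s = 1/2"
  hence es: "e = -1" "s = 1/2" by auto
  have Q0: "G3_Q e s \<noteq> 0" using Q_ne0 es by simp
  have Qsp0: "Qsp \<noteq> 0" by (simp add: Qsp_def)
  have rel: "\<forall>k<length [G3_P1 e s, G3_P2 e s, G3_P3 e s].
      [G3_P1 e s, G3_P2 e s, G3_P3 e s] ! k * Qsp = [P1sp, P2sp, P3sp] ! k * G3_Q e s"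
  proof (intro allI impI)
    fix k assume "k < length [G3_P1 e s, G3_P2 e s, G3_P3 e s]"
    hence "k = 0 \<or> k = 1 \<or> k = 2" by auto
    thus "[G3_P1 e s, G3_P2 e s, G3_P3 e s] ! k * Qsp = [P1sp, P2sp, P3sp] ! k * G3_Q e s"
      unfolding es by (auto simp: sp_Q sp_P1 sp_P2 sp_P3 ac_simps)
  qed
  show "rat_map_degree [G3_P1 e s, G3_P2 e s, G3_P3 e s] (G3_Q e s) = 2"
    using rat_map_degree_eq[OF Q0 Qsp0 _ rel sp_reduced] sp_degree by simp
next
  assume h: "rat_map_degree [G3_P1 e s, G3_P2 e s, G3_P3 e s] (G3_Q e s) = 2"
  show "e = -1 \<and> s = 1/2"
  proof (rule ccontr)
    assume ns: "\<not> (e = -1 \<and> s = 1/2)"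
    have e0: "e \<noteq> 0" using assms(1) by auto
    have Q0: "G3_Q e s \<noteq> 0" using Q_ne0[OF e0] .
    have "rat_map_degree [G3_P1 e s, G3_P2 e s, G3_P3 e s] (G3_Q e s)
        = Max (tdeg ` set (G3_Q e s # [G3_P1 e s, G3_P2 e s, G3_P3 e s]))"
      by (rule rat_map_degree_eq[OF Q0 Q0]) (auto intro: nonspecial_reduced[OF assms ns])
    also have "\<dots> \<ge> tdeg (G3_P1 e s)" by (rule Max_ge) auto
    finally have "3 \<le> rat_map_degree [G3_P1 e s, G3_P2 e s, G3_P3 e s] (G3_Q e s)"
      using tdeg_P1[of e s] by linarith
    thus False using h by simp
  qed
qed

end
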